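(* Let $\mathcal{G}$ be a connected simple undirected graph on $N$ nodes, $G=(D+I_N)^{-1}(A+I_N)$, $T>0$ and $g<0$. Let $\Gamma=e^{gT}I_N-(e^{gT}-1)G$. Then every eigenvalue $\mu$ of $\Gamma$ is real and satisfies $-1<\mu\le 1$, $\mu=1$ is an eigenvalue of algebraic multiplicity one, and $\Gamma\mathbf{1}_N=\mathbf{1}_N$. Moreover, every solution of $\dot x(t)=gx(t)-gGx(kT)$ for $t\in[kT,(k+1)T)$, $k=0,1,2,\dots$ (with $x$ continuous) satisfies $x((k+1)T)=\Gamma x(kT)$ for all $k\ge 0$.
   Context: $A$ is the adjacency matrix and $D$ the degree matrix of the graph; $\mathbf{1}_N$ is the all-ones vector. *)

theory Defs
  imports Complex_Main "Jordan_Normal_Form.Char_Poly" "Jordan_Normal_Form.Gauss_Jordan_Elimination"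
begin

text \<open>A simple undirected graph on the vertex set {0..<N} is given by a symmetric,
irreflexive adjacency relation E (only its restriction to {0..<N} matters).\<close>

definition simple_graph :: "nat \<Rightarrow> (nat \<Rightarrow> nat \<Rightarrow> bool) \<Rightarrow> bool" where
  "simple_graph N E \<longleftrightarrow> (\<forall>i<N. \<forall>j<N. E i j \<longleftrightarrow> E j i) \<and> (\<forall>i<N. \<not> E i i)"

definition graph_connected :: "nat \<Rightarrow> (nat \<Rightarrow> nat \<Rightarrow> bool) \<Rightarrow> bool" where
  "graph_connected N E \<longleftrightarrow> N > 0 \<and>
     (\<forall>i<N. \<forall>j<N. (\<lambda>u v. u < N \<and> v < N \<and> E u v)\<^sup>*\<^sup>* i j)"

definition adj_mat :: "nat \<Rightarrow> (nat \<Rightarrow> nat \<Rightarrow> bool) \<Rightarrow> real mat" where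
  "adj_mat N E = mat N N (\<lambda>(i, j). if E i j then 1 else 0)"

definition degree :: "nat \<Rightarrow> (nat \<Rightarrow> nat \<Rightarrow> bool) \<Rightarrow> nat \<Rightarrow> nat" where
  "degree N E i = card {j. j < N \<and> E i j}"

definition deg_mat :: "nat \<Rightarrow> (nat \<Rightarrow> nat \<Rightarrow> bool) \<Rightarrow> real mat" where
  "deg_mat N E = mat N N (\<lambda>(i, j). if i = j then real (degree N E i) else 0)"

text \<open>G = (D + I)^{-1} (A + I); D + I is invertible (positive diagonal).\<close>
definition G_mat :: "nat \<Rightarrow> (nat \<Rightarrow> nat \<Rightarrow> bool) \<Rightarrow> real mat" where
  "G_mat N E = the (mat_inverse (deg_mat N E + 1\<^sub>m N)) * (adj_mat N E + 1\<^sub>m N)"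

definition Gamma_mat :: "nat \<Rightarrow> (nat \<Rightarrow> nat \<Rightarrow> bool) \<Rightarrow> real \<Rightarrow> real \<Rightarrow> real mat" where
  "Gamma_mat N E g T = exp (g * T) \<cdot>\<^sub>m 1\<^sub>m N - (exp (g * T) - 1) \<cdot>\<^sub>m G_mat N E"

definition ones_vec :: "nat \<Rightarrow> real vec" where
  "ones_vec N = vec N (\<lambda>_. 1)"

end

theory Submission
  imports Defs "Jordan_Normal_Form.Jordan_Normal_Form_Uniqueness" "Jordan_Normal_Form.Jordan_Normal_Form_Existence"
begin

definition ee :: "(nat \<Rightarrow> nat \<Rightarrow> bool) \<Rightarrow> nat \<Rightarrow> nat \<Rightarrow> real" where
  "ee E i j = (if E i j then 1 else 0)"
definition sm :: "(nat \<Rightarrow> nat \<Rightarrow> bool) \<Rightarrow> nat \<Rightarrow> nat \<Rightarrow> real" where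
  "sm E i j = ee E i j + (if i = j then 1 else 0)"
definition wt :: "nat \<Rightarrow> (nat \<Rightarrow> nat \<Rightarrow> bool) \<Rightarrow> nat \<Rightarrow> real" where
  "wt N E i = real (degree N E i) + 1"
definition Sop :: "nat \<Rightarrow> (nat \<Rightarrow> nat \<Rightarrow> bool) \<Rightarrow> (nat \<Rightarrow> real) \<Rightarrow> nat \<Rightarrow> real" where
  "Sop N E u i = (\<Sum>j<N. sm E i j * u j)"

lemma wt_pos: "wt N E i > 0" unfolding wt_def by simp

lemma deg_sum: "real (degree N E i) = (\<Sum>j<N. ee E i j)"
proof -
  have "(\<Sum>j<N. ee E i j) = (\<Sum>j\<in>{j. j < N \<and> E i j}. 1)"
    unfolding ee_def by (rule sum.mono_neutral_cong_right) auto
  then show ?thesis unfolding degree_def by simp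
qed

context fixes N E assumes sg: "simple_graph N E"
begin

lemma ee_sym: "i < N \<Longrightarrow> j < N \<Longrightarrow> ee E i j = ee E j i"
  using sg unfolding simple_graph_def ee_def by auto

lemma sm_sym: "i < N \<Longrightarrow> j < N \<Longrightarrow> sm E i j = sm E j i"
  using ee_sym unfolding sm_def by auto

lemma Sop_sym: "(\<Sum>i<N. x i * Sop N E y i) = (\<Sum>i<N. y i * Sop N E x i)"
proof -
  have "(\<Sum>i<N. x i * Sop N E y i) = (\<Sum>i<N. \<Sum>j<N. x i * sm E i j * y j)"
    unfolding Sop_def by (simp add: sum_distrib_left mult.assoc)
  also have "\<dots> = (\<Sum>j<N. \<Sum>i<N. x i * sm E i j * y j)" by (rule sum.swap)
  also have "\<dots> = (\<Sum>j<N. \<Sum>i<N. y j * sm E j i * x i)"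
    by (intro sum.cong refl) (simp add: sm_sym mult.commute mult.left_commute)
  also have "\<dots> = (\<Sum>i<N. y i * Sop N E x i)"
    unfolding Sop_def by (simp add: sum_distrib_left mult.assoc)
  finally show ?thesis .
qed

lemma colsum: "(\<Sum>i<N. Sop N E u i) = (\<Sum>j<N. wt N E j * u j)"
proof -
  have "(\<Sum>i<N. Sop N E u i) = (\<Sum>j<N. \<Sum>i<N. sm E i j * u j)"
    unfolding Sop_def by (rule sum.swap)
  also have "\<dots> = (\<Sum>j<N. (\<Sum>i<N. sm E j i) * u j)"
    by (intro sum.cong refl) (simp add: sum_distrib_right sm_sym)
  also have "\<dots> = (\<Sum>j<N. wt N E j * u j)"
  proof (intro sum.cong refl)
    fix j assume j: "j \<in> {..<N}"
    have "(\<Sum>i<N. sm E j i) = (\<Sum>i<N. ee E j i) + (\<Sum>i<N. if j = i then 1 else 0)"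
      unfolding sm_def by (simp add: sum.distrib)
    also have "\<dots> = wt N E j" using j by (simp add: wt_def deg_sum)
    finally show "(\<Sum>i<N. sm E j i) * u j = wt N E j * u j" by simp
  qed
  finally show ?thesis .
qed

lemma ones_Sop: "i < N \<Longrightarrow> Sop N E (\<lambda>_. 1) i = wt N E i"
proof -
  assume i: "i < N"
  have "Sop N E (\<lambda>_. 1) i = (\<Sum>j<N. ee E i j) + (\<Sum>j<N. if i = j then 1 else 0)"
    unfolding Sop_def sm_def by (simp add: sum.distrib)
  also have "\<dots> = wt N E i" using i by (simp add: wt_def deg_sum)
  finally show ?thesis .
qed

definition "QA u = (\<Sum>i<N. \<Sum>j<N. ee E i j * u i * u j)"
definition "QD u = (\<Sum>i<N. \<Sum>j<N. ee E i j * (u i)^2)"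
definition "PP u = (\<Sum>i<N. (u i)^2)"

lemma F1: "(\<Sum>i<N. \<Sum>j<N. ee E i j * (u j)^2) = QD u"
proof -
  have "(\<Sum>i<N. \<Sum>j<N. ee E i j * (u j)^2) = (\<Sum>j<N. \<Sum>i<N. ee E i j * (u j)^2)" by (rule sum.swap)
  also have "\<dots> = QD u" unfolding QD_def by (intro sum.cong refl) (simp add: ee_sym)
  finally show ?thesis .
qed

lemma Sop_split: "i < N \<Longrightarrow> Sop N E u i = (\<Sum>j<N. ee E i j * u j) + u i"
proof -
  assume i: "i < N"
  have "Sop N E u i = (\<Sum>j<N. ee E i j * u j) + (\<Sum>j<N. (if i = j then 1 else 0) * u j)"
    unfolding Sop_def sm_def by (simp add: distrib_right sum.distrib)
  also have "(\<Sum>j<N. (if i = j then 1 else 0) * u j) = (\<Sum>j<N. (if i = j then u j else 0))"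
    by (intro sum.cong) auto
  also have "\<dots> = u i" using i by simp
  finally show ?thesis .
qed

lemma F2: "(\<Sum>i<N. u i * Sop N E u i) = QA u + PP u"
proof -
  have "(\<Sum>i<N. u i * Sop N E u i) = (\<Sum>i<N. (\<Sum>j<N. ee E i j * u i * u j) + (u i)^2)"
    by (intro sum.cong refl) (simp add: Sop_split sum_distrib_left power2_eq_square algebra_simps)
  then show ?thesis unfolding QA_def PP_def by (simp add: sum.distrib)
qed

lemma F3: "(\<Sum>i<N. wt N E i * (u i)^2) = QD u + PP u"
  unfolding QD_def PP_def wt_def by (simp add: deg_sum sum_distrib_right sum.distrib algebra_simps)

lemma F4: "(\<Sum>i<N. \<Sum>j<N. ee E i j * (u i - u j)^2) = 2 * QD u - 2 * QA u"
proof -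
  have "(\<Sum>i<N. \<Sum>j<N. ee E i j * (u i - u j)^2) =
    (\<Sum>i<N. \<Sum>j<N. ee E i j * (u i)^2) + (\<Sum>i<N. \<Sum>j<N. ee E i j * (u j)^2) - 2 * QA u"
    unfolding QA_def by (simp add: power2_diff sum.distrib sum_subtractf sum_distrib_left algebra_simps)
  then show ?thesis using F1 unfolding QD_def by simp
qed

lemma F5: "(\<Sum>i<N. \<Sum>j<N. ee E i j * (u i + u j)^2) = 2 * QD u + 2 * QA u"
proof -
  have "(\<Sum>i<N. \<Sum>j<N. ee E i j * (u i + u j)^2) =
    (\<Sum>i<N. \<Sum>j<N. ee E i j * (u i)^2) + (\<Sum>i<N. \<Sum>j<N. ee E i j * (u j)^2) + 2 * QA u"
    unfolding QA_def by (simp add: power2_sum sum.distrib sum_distrib_left algebra_simps)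
  then show ?thesis using F1 unfolding QD_def by simp
qed

lemma ee_nonneg: "ee E i j \<ge> 0" unfolding ee_def by simp

lemma F4_nonneg: "0 \<le> (\<Sum>i<N. \<Sum>j<N. ee E i j * (u i - u j)^2)"
  by (intro sum_nonneg mult_nonneg_nonneg ee_nonneg) auto
lemma F5_nonneg: "0 \<le> (\<Sum>i<N. \<Sum>j<N. ee E i j * (u i + u j)^2)"
  by (intro sum_nonneg mult_nonneg_nonneg ee_nonneg) auto

lemma eig_bound:
  assumes eq: "\<And>i. i < N \<Longrightarrow> Sop N E u i = l * wt N E i * u i"
    and nz: "i0 < N" "u i0 \<noteq> 0"
  shows "-1 < l \<and> l \<le> 1"
proof -
  have "(\<Sum>i<N. u i * Sop N E u i) = l * (\<Sum>i<N. wt N E i * (u i)^2)"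
    by (simp add: eq sum_distrib_left power2_eq_square algebra_simps)
  hence key: "QA u + PP u = l * (QD u + PP u)" using F2 F3 by simp
  have P: "PP u > 0" unfolding PP_def
    by (rule sum_pos2[of _ i0]) (use nz in auto)
  have "QA u \<le> QD u" using F4 F4_nonneg[of u] by simp
  moreover have "- QA u \<le> QD u" using F5 F5_nonneg[of u] by simp
  moreover have "QD u \<ge> 0" using calculation by simp
  ultimately have "QD u + PP u > 0" using P by simp
  show ?thesis
  proof
    show "-1 < l"
    proof (rule ccontr)
      assume "\<not> -1 < l"
      hence "l * (QD u + PP u) \<le> -1 * (QD u + PP u)"
        using \<open>QD u + PP u > 0\<close> by (intro mult_right_mono) auto
      thus False using key \<open>- QA u \<le> QD u\<close> P by simp
    qed
    show "l \<le> 1"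
    proof (rule ccontr)
      assume "\<not> l \<le> 1"
      hence "l * (QD u + PP u) > 1 * (QD u + PP u)"
        using \<open>QD u + PP u > 0\<close> by (intro mult_strict_right_mono) auto
      thus False using key \<open>QA u \<le> QD u\<close> by simp
    qed
  qed
qed

lemma harmonic_edge:
  assumes eq: "\<And>i. i < N \<Longrightarrow> Sop N E u i = wt N E i * u i"
  shows "\<And>i j. i < N \<Longrightarrow> j < N \<Longrightarrow> E i j \<Longrightarrow> u i = u j"
proof -
  have "(\<Sum>i<N. u i * Sop N E u i) = (\<Sum>i<N. wt N E i * (u i)^2)"
    by (simp add: eq power2_eq_square algebra_simps)
  hence "QA u = QD u" using F2 F3 by simp
  hence z: "(\<Sum>i<N. \<Sum>j<N. ee E i j * (u i - u j)^2) = 0" using F4 by simp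
  fix i j assume ij: "i < N" "j < N" "E i j"
  have "(\<Sum>j<N. ee E i j * (u i - u j)^2) = 0"
    using z ij by (subst (asm) sum_nonneg_eq_0_iff) (auto intro!: sum_nonneg mult_nonneg_nonneg ee_nonneg)
  hence "ee E i j * (u i - u j)^2 = 0"
    using ij by (subst (asm) sum_nonneg_eq_0_iff) (auto intro!: mult_nonneg_nonneg ee_nonneg)
  thus "u i = u j" using ij by (simp add: ee_def)
qed

lemma harmonic_const:
  assumes conn: "graph_connected N E"
    and eq: "\<And>i. i < N \<Longrightarrow> Sop N E u i = wt N E i * u i"
  shows "\<And>i. i < N \<Longrightarrow> u i = u 0"
proof -
  fix i assume i: "i < N"
  have N0: "0 < N" using conn unfolding graph_connected_def by simp
  have r: "(\<lambda>u v. u < N \<and> v < N \<and> E u v)\<^sup>*\<^sup>* 0 i" using conn i N0 unfolding graph_connected_def by blast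
  have "\<And>a b. (\<lambda>u v. u < N \<and> v < N \<and> E u v)\<^sup>*\<^sup>* a b \<Longrightarrow> u a = u b"
  proof -
    fix a b assume "(\<lambda>u v. u < N \<and> v < N \<and> E u v)\<^sup>*\<^sup>* a b"
    then show "u a = u b"
    proof (induction rule: rtranclp_induct)
      case (step y z) then show ?case using harmonic_edge[OF eq, of y z] by simp
    qed simp
  qed
  from this[OF r] show "u i = u 0" by simp
qed

end

definition Winv :: "nat \<Rightarrow> (nat \<Rightarrow> nat \<Rightarrow> bool) \<Rightarrow> real mat" where
  "Winv N E = mat N N (\<lambda>(i,j). if i = j then 1 / wt N E i else 0)"

lemma W_entry: "i < N \<Longrightarrow> j < N \<Longrightarrow> (deg_mat N E + 1\<^sub>m N) $$ (i,j) = (if i = j then wt N E i else 0)"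
  by (simp add: deg_mat_def wt_def)

lemma deg_entry: "i < N \<Longrightarrow> j < N \<Longrightarrow> deg_mat N E $$ (i,j) = (if i = j then real (degree N E i) else 0)"
  by (simp add: deg_mat_def)

lemma W_carrier: "deg_mat N E + 1\<^sub>m N \<in> carrier_mat N N" by (simp add: deg_mat_def)
lemma Winv_carrier: "Winv N E \<in> carrier_mat N N" by (simp add: Winv_def)

lemma diag_sum: "i < (N::nat) \<Longrightarrow> (\<Sum>k<N. (if i = k then c else 0) * f k) = (c * f i :: real)"
proof -
  assume i: "i < N"
  have "(\<Sum>k<N. (if i = k then c else 0) * f k) = (\<Sum>k\<in>{..<N}. if i = k then c * f k else 0)"
    by (rule sum.cong) auto
  also have "\<dots> = c * f i" by (subst sum.delta') (use i in auto)
  finally show ?thesis .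
qed

lemma diag_sum': "j < (N::nat) \<Longrightarrow> (\<Sum>k<N. f k * (if k = j then c else 0)) = (f j * c :: real)"
proof -
  assume i: "j < N"
  have "(\<Sum>k<N. f k * (if k = j then c else 0)) = (\<Sum>k\<in>{..<N}. if k = j then f k * c else 0)"
    by (rule sum.cong) auto
  also have "\<dots> = f j * c" by (subst sum.delta) (use i in auto)
  finally show ?thesis .
qed

lemma scalar_sum: "v \<in> carrier_vec N \<Longrightarrow> w \<in> carrier_vec N \<Longrightarrow> v \<bullet> w = (\<Sum>k<N. v $ k * w $ k)"
  unfolding scalar_prod_def by (simp add: lessThan_atLeast0)

lemma Winv_mult1: "Winv N E * (deg_mat N E + 1\<^sub>m N) = 1\<^sub>m N"
proof (rule eq_matI)
  fix i j assume ij: "i < dim_row (1\<^sub>m N :: real mat)" "j < dim_col (1\<^sub>m N :: real mat)"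
  hence ij: "i < N" "j < N" by auto
  have "(Winv N E * (deg_mat N E + 1\<^sub>m N)) $$ (i,j) = (\<Sum>k<N. (if i = k then 1 / wt N E i else 0) * (deg_mat N E + 1\<^sub>m N) $$ (k,j))"
    using ij by (simp add: index_mult_mat Winv_def scalar_sum[of _ N] deg_mat_def row_def col_def)
  also have "\<dots> = 1 / wt N E i * (deg_mat N E + 1\<^sub>m N) $$ (i,j)" by (rule diag_sum[OF ij(1)])
  also have "\<dots> = (1\<^sub>m N) $$ (i,j)" using ij wt_pos[of N E i] wt_pos[of N E j] by (simp add: deg_entry wt_def)
  finally show "(Winv N E * (deg_mat N E + 1\<^sub>m N)) $$ (i,j) = (1\<^sub>m N) $$ (i,j)" .
qed (auto simp: Winv_def deg_mat_def)

lemma Winv_mult2: "(deg_mat N E + 1\<^sub>m N) * Winv N E = 1\<^sub>m N"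
proof (rule eq_matI)
  fix i j assume ij: "i < dim_row (1\<^sub>m N :: real mat)" "j < dim_col (1\<^sub>m N :: real mat)"
  hence ij: "i < N" "j < N" by auto
  have "((deg_mat N E + 1\<^sub>m N) * Winv N E) $$ (i,j) = (\<Sum>k<N. (deg_mat N E + 1\<^sub>m N) $$ (i,k) * (if k = j then 1 / wt N E j else 0))"
    using ij by (auto simp: index_mult_mat Winv_def scalar_sum[of _ N] deg_mat_def row_def col_def intro!: sum.cong)
  also have "\<dots> = (deg_mat N E + 1\<^sub>m N) $$ (i,j) * (1 / wt N E j)" by (rule diag_sum'[OF ij(2)])
  also have "\<dots> = (1\<^sub>m N) $$ (i,j)" using ij wt_pos[of N E i] wt_pos[of N E j] by (simp add: deg_entry wt_def)
  finally show "((deg_mat N E + 1\<^sub>m N) * Winv N E) $$ (i,j) = (1\<^sub>m N) $$ (i,j)" .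
qed (auto simp: Winv_def deg_mat_def)

lemma inv_W: "the (mat_inverse (deg_mat N E + 1\<^sub>m N)) = Winv N E"
proof (cases "mat_inverse (deg_mat N E + 1\<^sub>m N)")
  case None
  have "deg_mat N E + 1\<^sub>m N \<in> Units (ring_mat TYPE(real) N ())"
    unfolding Units_def ring_mat_def using W_carrier[of N E] Winv_carrier[of N E] Winv_mult1 Winv_mult2
    by (auto intro!: bexI[where x="Winv N E"])
  with mat_inverse(1)[OF W_carrier None, where b="()"] show ?thesis by blast
next
  case (Some B)
  from mat_inverse(2)[OF W_carrier Some] have B: "(deg_mat N E + 1\<^sub>m N) * B = 1\<^sub>m N" "B \<in> carrier_mat N N" by auto
  have "B = (Winv N E * (deg_mat N E + 1\<^sub>m N)) * B" using B by (simp add: Winv_mult1)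
  also have "\<dots> = Winv N E * ((deg_mat N E + 1\<^sub>m N) * B)"
    by (rule assoc_mult_mat[OF Winv_carrier W_carrier B(2)])
  also have "\<dots> = Winv N E" using B(1) right_mult_one_mat[OF Winv_carrier] by simp
  finally show ?thesis using Some by simp
qed

lemma G_carrier: "G_mat N E \<in> carrier_mat N N"
  unfolding G_mat_def inv_W by (rule mult_carrier_mat) (auto simp: Winv_def adj_mat_def)

lemma G_entry: "i < N \<Longrightarrow> j < N \<Longrightarrow> G_mat N E $$ (i,j) = sm E i j / wt N E i"
proof -
  assume ij: "i < N" "j < N"
  have "G_mat N E $$ (i,j) = (\<Sum>k<N. (if i = k then 1 / wt N E i else 0) * (adj_mat N E + 1\<^sub>m N) $$ (k,j))"
    unfolding G_mat_def inv_W
    using ij by (simp add: index_mult_mat Winv_def scalar_sum[of _ N] adj_mat_def row_def col_def)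
  also have "\<dots> = 1 / wt N E i * (adj_mat N E + 1\<^sub>m N) $$ (i,j)" by (rule diag_sum[OF ij(1)])
  also have "\<dots> = sm E i j / wt N E i" using ij by (simp add: adj_mat_def sm_def ee_def)
  finally show ?thesis .
qed

lemma Gamma_carrier: "Gamma_mat N E g T \<in> carrier_mat N N"
  using G_carrier[of N E] unfolding Gamma_mat_def carrier_mat_def by simp

lemma Gamma_entry: "i < N \<Longrightarrow> j < N \<Longrightarrow> Gamma_mat N E g T $$ (i,j) =
   (if i = j then exp (g*T) else 0) - (exp (g*T) - 1) * (sm E i j / wt N E i)"
  using G_carrier[of N E] by (simp add: Gamma_mat_def G_entry)

lemma mult_vec_sum: "A \<in> carrier_mat N N \<Longrightarrow> v \<in> carrier_vec N \<Longrightarrow> i < N \<Longrightarrow>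
   (A *\<^sub>v v) $ i = (\<Sum>j<N. A $$ (i,j) * v $ j)"
  by (simp add: scalar_sum[of _ N] row_def)

lemma Gamma_apply: "i < N \<Longrightarrow>
   (\<Sum>j<N. Gamma_mat N E g T $$ (i,j) * u j) = exp (g*T) * u i + (1 - exp (g*T)) * (Sop N E u i / wt N E i)"
proof -
  assume i: "i < N"
  let ?a = "exp (g*T)"
  have "(\<Sum>j<N. Gamma_mat N E g T $$ (i,j) * u j) =
     (\<Sum>j<N. (if i = j then ?a else 0) * u j - ((?a - 1) / wt N E i) * (sm E i j * u j))"
    by (intro sum.cong refl) (use i in \<open>simp add: Gamma_entry algebra_simps\<close>)
  also have "\<dots> = (\<Sum>j<N. (if i = j then ?a else 0) * u j) - ((?a - 1) / wt N E i) * (\<Sum>j<N. sm E i j * u j)"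
    by (simp add: sum_subtractf sum_distrib_left)
  also have "(\<Sum>j<N. (if i = j then ?a else 0) * u j) = ?a * u i" using i by (rule diag_sum)
  finally have "(\<Sum>j<N. Gamma_mat N E g T $$ (i,j) * u j) = ?a * u i - (?a - 1) / wt N E i * (\<Sum>j<N. sm E i j * u j)" .
  then show ?thesis unfolding Sop_def using wt_pos[of N E i] by (simp add: field_simps)
qed

lemma G_apply: "i < N \<Longrightarrow> (\<Sum>j<N. G_mat N E $$ (i,j) * u j) = Sop N E u i / wt N E i"
  unfolding Sop_def by (simp add: G_entry sum_divide_distrib)


lemma solve_lin:
  fixes a w x y S R I :: real
  assumes w: "w > 0" and a: "a < 1" and h: "a*x + (1-a)*(S/w) = R*x - I*y"
  shows "S = w * (((R - a)/(1-a)) * x - (I/(1-a)) * y)"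
proof -
  have h1: "(1-a)*(S/w) = (R-a)*x - I*y" using h by (simp add: algebra_simps)
  have "S = w * ((1-a)*(S/w)) / (1-a)" using w a by simp
  also have "\<dots> = w * ((R-a)*x - I*y) / (1-a)" by (simp only: h1)
  also have "\<dots> = w * (((R - a)/(1-a)) * x - (I/(1-a)) * y)"
  proof -
    have gen: "\<And>c p q. c \<noteq> 0 \<Longrightarrow> w*(p*x - q*y)/c = w*((p/c)*x - (q/c)*y)"
      by (simp add: field_simps)
    have ne: "1 - a \<noteq> 0" using a by simp
    show ?thesis by (rule gen[OF ne])
  qed
  finally show ?thesis .
qed
lemma a_bounds: "g < 0 \<Longrightarrow> T > 0 \<Longrightarrow> 0 < exp (g*T) \<and> exp (g*T) < (1::real)"
proof -
  assume "g < 0" "T > 0"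
  hence "g * T < 0" by (rule mult_neg_pos)
  thus ?thesis by simp
qed

lemma Gamma_ones:
  assumes sg: "simple_graph N E"
  shows "Gamma_mat N E g T *\<^sub>v ones_vec N = ones_vec N"
proof (rule eq_vecI)
  fix i assume "i < dim_vec (ones_vec N)"
  hence i: "i < N" by (simp add: ones_vec_def)
  have "(Gamma_mat N E g T *\<^sub>v ones_vec N) $ i = (\<Sum>j<N. Gamma_mat N E g T $$ (i,j) * (\<lambda>_. 1) j)"
    using i by (subst mult_vec_sum[OF Gamma_carrier _ i]) (auto simp: ones_vec_def)
  also have "\<dots> = 1" using Gamma_apply[OF i, of E g T "\<lambda>_. 1"] ones_Sop[OF sg i] wt_pos[of N E i] by simp
  finally show "(Gamma_mat N E g T *\<^sub>v ones_vec N) $ i = ones_vec N $ i" using i by (simp add: ones_vec_def)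
qed (simp add: ones_vec_def Gamma_carrier[THEN carrier_matD(1)])

lemma Gamma_eig1:
  assumes sg: "simple_graph N E" and N: "N > 0"
  shows "eigenvalue (Gamma_mat N E g T) 1"
  unfolding eigenvalue_def eigenvector_def
proof (intro exI conjI)
  show "ones_vec N \<in> carrier_vec (dim_row (Gamma_mat N E g T))"
    using Gamma_carrier[of N E g T] by (simp add: ones_vec_def)
  show "ones_vec N \<noteq> 0\<^sub>v (dim_row (Gamma_mat N E g T))"
  proof
    assume "ones_vec N = 0\<^sub>v (dim_row (Gamma_mat N E g T))"
    hence "ones_vec N $ 0 = 0\<^sub>v (dim_row (Gamma_mat N E g T)) $ 0" by simp
    thus False using N Gamma_carrier[of N E g T] by (simp add: ones_vec_def)
  qed
  show "Gamma_mat N E g T *\<^sub>v ones_vec N = 1 \<cdot>\<^sub>v ones_vec N" using Gamma_ones[OF sg] by simp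
qed

lemma complex_eig:
  assumes sg: "simple_graph N E" and g: "g < 0" and T: "T > 0"
    and ev: "eigenvalue (map_mat complex_of_real (Gamma_mat N E g T)) \<mu>"
  shows "\<mu> \<in> \<real> \<and> -1 < Re \<mu> \<and> Re \<mu> \<le> 1"
proof -
  let ?G = "Gamma_mat N E g T"
  let ?a = "exp (g*T)"
  have a: "0 < ?a" "?a < 1" using a_bounds[OF g T] by auto
  from ev obtain v where ev': "eigenvector (map_mat complex_of_real ?G) v \<mu>"
    unfolding eigenvalue_def by blast
  have dr: "dim_row (map_mat complex_of_real ?G) = N" using Gamma_carrier[of N E g T] by simp
  have v: "v \<in> carrier_vec N" "v \<noteq> 0\<^sub>v N" "map_mat complex_of_real ?G *\<^sub>v v = \<mu> \<cdot>\<^sub>v v"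
    using ev' unfolding eigenvector_def dr by blast+
  define x where "x j = Re (v $ j)" for j
  define y where "y j = Im (v $ j)" for j
  define l where "l = (Re \<mu> - ?a) / (1 - ?a)"
  define k where "k = Im \<mu> / (1 - ?a)"
  have cplx: "(\<Sum>j<N. complex_of_real (?G $$ (i,j)) * v $ j) = \<mu> * v $ i" if i: "i < N" for i
  proof -
    have "(map_mat complex_of_real ?G *\<^sub>v v) $ i = (\<Sum>j<N. map_mat complex_of_real ?G $$ (i,j) * v $ j)"
      using i v(1) Gamma_carrier[of N E g T] by (intro mult_vec_sum) auto
    also have "\<dots> = (\<Sum>j<N. complex_of_real (?G $$ (i,j)) * v $ j)"
      using i Gamma_carrier[of N E g T] by (intro sum.cong refl) auto
    finally show ?thesis using v(3) i v(1) by simp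
  qed
  have ex: "Sop N E x i = wt N E i * (l * x i - k * y i)" and ey: "Sop N E y i = wt N E i * (l * y i + k * x i)"
    if i: "i < N" for i
  proof -
    have "Re (\<Sum>j<N. complex_of_real (?G $$ (i,j)) * v $ j) = (\<Sum>j<N. ?G $$ (i,j) * x j)"
      unfolding x_def by (simp add: Re_sum)
    hence r: "(\<Sum>j<N. ?G $$ (i,j) * x j) = Re \<mu> * x i - Im \<mu> * y i"
      using cplx[OF i] by (simp add: x_def y_def)
    have "Im (\<Sum>j<N. complex_of_real (?G $$ (i,j)) * v $ j) = (\<Sum>j<N. ?G $$ (i,j) * y j)"
      unfolding y_def by (simp add: Im_sum)
    hence m: "(\<Sum>j<N. ?G $$ (i,j) * y j) = Re \<mu> * y i + Im \<mu> * x i"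
      using cplx[OF i] by (simp add: x_def y_def)
    have w: "wt N E i > 0" by (rule wt_pos)
    from r Gamma_apply[OF i, of E g T x]
    have "?a * x i + (1 - ?a) * (Sop N E x i / wt N E i) = Re \<mu> * x i - Im \<mu> * y i" by simp
    from solve_lin[OF w a(2) this] show "Sop N E x i = wt N E i * (l * x i - k * y i)"
      unfolding l_def k_def .
    from m Gamma_apply[OF i, of E g T y]
    have "?a * y i + (1 - ?a) * (Sop N E y i / wt N E i) = Re \<mu> * y i + Im \<mu> * x i" by simp
    hence "?a * y i + (1 - ?a) * (Sop N E y i / wt N E i) = Re \<mu> * y i - (- Im \<mu>) * x i" by simp
    from solve_lin[OF w a(2) this] show "Sop N E y i = wt N E i * (l * y i + k * x i)"
      unfolding l_def k_def by (simp add: algebra_simps)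
  qed
  have "\<exists>i0<N. v $ i0 \<noteq> 0"
  proof (rule ccontr)
    assume "\<not> (\<exists>i0<N. v $ i0 \<noteq> 0)"
    hence "v = 0\<^sub>v N" using v(1) by (intro eq_vecI) auto
    thus False using v(2) by blast
  qed
  then obtain i0 where i0: "i0 < N" "v $ i0 \<noteq> 0" by blast
  have xy: "x i0 \<noteq> 0 \<or> y i0 \<noteq> 0"
  proof (rule ccontr)
    assume "\<not> (x i0 \<noteq> 0 \<or> y i0 \<noteq> 0)"
    hence "v $ i0 = 0" unfolding x_def y_def by (simp add: complex_eq_iff)
    thus False using i0(2) by blast
  qed
  have p0: "0 < wt N E i0 * ((x i0)^2 + (y i0)^2)"
  proof (rule mult_pos_pos)
    show "0 < wt N E i0" by (rule wt_pos)
    show "0 < (x i0)^2 + (y i0)^2" using xy by (simp only: sum_power2_gt_zero_iff)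
  qed
  have nn: "0 \<le> wt N E i * ((x i)^2 + (y i)^2)" for i
  proof (rule mult_nonneg_nonneg)
    show "0 \<le> wt N E i" by (rule less_imp_le[OF wt_pos])
    show "0 \<le> (x i)^2 + (y i)^2" by (rule add_nonneg_nonneg) (rule zero_le_power2)+
  qed
  have pos: "(\<Sum>i<N. wt N E i * ((x i)^2 + (y i)^2)) > 0"
    by (rule sum_pos2[where I="{..<N}" and i=i0 and f="\<lambda>i. wt N E i * ((x i)^2 + (y i)^2)"])
      (simp_all only: finite_lessThan lessThan_iff i0(1) p0 nn)
  have "(\<Sum>i<N. y i * Sop N E x i) = (\<Sum>i<N. x i * Sop N E y i)" by (rule Sop_sym[OF sg])
  hence symeq: "(\<Sum>i<N. y i * (wt N E i * (l * x i - k * y i))) = (\<Sum>i<N. x i * (wt N E i * (l * y i + k * x i)))"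
    by (simp add: ex ey)
  define A1 where "A1 = (\<Sum>i<N. wt N E i * x i * y i)"
  define B1 where "B1 = (\<Sum>i<N. wt N E i * (y i)^2)"
  define C1 where "C1 = (\<Sum>i<N. wt N E i * (x i)^2)"
  have m1: "(\<Sum>i<N. y i * (wt N E i * (l * x i - k * y i))) = l * A1 - k * B1"
  proof -
    have "(\<Sum>i<N. y i * (wt N E i * (l * x i - k * y i))) = (\<Sum>i<N. l * (wt N E i * x i * y i) - k * (wt N E i * (y i)^2))"
      by (intro sum.cong refl) (simp add: algebra_simps power2_eq_square)
    also have "\<dots> = l * A1 - k * B1" unfolding A1_def B1_def
      by (simp only: sum_subtractf sum_distrib_left)
    finally show ?thesis .
  qed
  have m2: "(\<Sum>i<N. x i * (wt N E i * (l * y i + k * x i))) = l * A1 + k * C1"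
  proof -
    have "(\<Sum>i<N. x i * (wt N E i * (l * y i + k * x i))) = (\<Sum>i<N. l * (wt N E i * x i * y i) + k * (wt N E i * (x i)^2))"
      by (intro sum.cong refl) (simp add: algebra_simps power2_eq_square)
    also have "\<dots> = l * A1 + k * C1" unfolding A1_def C1_def
      by (simp only: sum.distrib sum_distrib_left)
    finally show ?thesis .
  qed
  have m3: "(\<Sum>i<N. wt N E i * ((x i)^2 + (y i)^2)) = C1 + B1" unfolding B1_def C1_def
    by (simp only: distrib_left sum.distrib)
  from symeq m1 m2 have "l * A1 - k * B1 = l * A1 + k * C1" by simp
  hence "k * (C1 + B1) = 0" by (simp only: distrib_left)
  hence "k * (\<Sum>i<N. wt N E i * ((x i)^2 + (y i)^2)) = 0" by (simp only: m3)
  hence k0: "k = 0" using pos by simp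
  hence im0: "Im \<mu> = 0" using a g T unfolding k_def by auto
  have lb: "-1 < l \<and> l \<le> 1"
  proof (cases "x i0 \<noteq> 0")
    case True
    show ?thesis by (rule eig_bound[where u=x and l=l, OF sg _ i0(1) True]) (simp add: ex k0 algebra_simps)
  next
    case False
    hence "y i0 \<noteq> 0" using xy by simp
    show ?thesis by (rule eig_bound[where u=y and l=l, OF sg _ i0(1) \<open>y i0 \<noteq> 0\<close>]) (simp add: ey k0 algebra_simps)
  qed
  have re: "Re \<mu> = ?a + (1 - ?a) * l"
  proof -
    have gen: "\<And>c::real. c \<noteq> 0 \<Longrightarrow> Re \<mu> = ?a + c * ((Re \<mu> - ?a) / c)" by simp
    have "1 - ?a \<noteq> 0" using a(2) by linarith
    from gen[OF this] show ?thesis unfolding l_def .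
  qed
  have "-1 < Re \<mu>"
  proof -
    have "(1 - ?a) * l > (1 - ?a) * (-1)" using lb a by (intro mult_strict_left_mono) auto
    hence "(1 - ?a) * l > ?a - 1" by (simp add: algebra_simps)
    thus ?thesis using re a by linarith
  qed
  moreover have "Re \<mu> \<le> 1"
  proof -
    have "(1 - ?a) * l \<le> (1 - ?a) * 1" using lb a by (intro mult_left_mono) auto
    hence "(1 - ?a) * l \<le> 1 - ?a" by simp
    thus ?thesis using re by linarith
  qed
  moreover have "\<mu> \<in> \<real>" using im0 by (simp add: complex_is_Real_iff)
  ultimately show ?thesis by simp
qed


definition Lr :: "nat \<Rightarrow> (nat \<Rightarrow> nat \<Rightarrow> bool) \<Rightarrow> real \<Rightarrow> real \<Rightarrow> (nat \<Rightarrow> real) \<Rightarrow> nat \<Rightarrow> real" where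
  "Lr N E g T u i = (\<Sum>j<N. (Gamma_mat N E g T $$ (i,j) - (if i = j then 1 else 0)) * u j)"

lemma Lr_cong: "(\<And>j. j < N \<Longrightarrow> u j = u' j) \<Longrightarrow> Lr N E g T u i = Lr N E g T u' i"
  unfolding Lr_def by (intro sum.cong) auto

lemma Lr_formula: "i < N \<Longrightarrow> Lr N E g T u i = (1 - exp (g*T)) * (Sop N E u i / wt N E i - u i)"
proof -
  assume i: "i < N"
  have "Lr N E g T u i = (\<Sum>j<N. Gamma_mat N E g T $$ (i,j) * u j) - (\<Sum>j<N. (if i = j then 1 else 0) * u j)"
    unfolding Lr_def by (simp add: sum_subtractf[symmetric] algebra_simps)
  also have "(\<Sum>j<N. (if i = j then 1 else 0) * u j) = 1 * u i" using i by (rule diag_sum)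
  finally show ?thesis using Gamma_apply[OF i, of E g T u] by (simp add: algebra_simps)
qed

lemma Lr_zero_harm: "i < N \<Longrightarrow> g < 0 \<Longrightarrow> T > 0 \<Longrightarrow> Lr N E g T u i = c * (1 - exp (g*T)) \<Longrightarrow>
   Sop N E u i = wt N E i * u i + wt N E i * c"
proof -
  assume i: "i < N" and g: "g < 0" and T: "T > 0" and h: "Lr N E g T u i = c * (1 - exp (g*T))"
  have a: "1 - exp (g*T) \<noteq> 0" using a_bounds[OF g T] by linarith
  from h Lr_formula[OF i] have "Sop N E u i / wt N E i - u i = c" using a by simp
  thus ?thesis using wt_pos[of N E i] by (simp add: field_simps)
qed

lemma R_const:
  assumes sg: "simple_graph N E" and conn: "graph_connected N E" and g: "g < 0" and T: "T > 0"
    and h: "\<And>i. i < N \<Longrightarrow> Lr N E g T (\<lambda>j. Lr N E g T u j) i = 0"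
  shows "\<And>i. i < N \<Longrightarrow> u i = u 0"
proof -
  define y where "y j = Lr N E g T u j" for j
  have N0: "0 < N" using conn unfolding graph_connected_def by simp
  have "Sop N E y i = wt N E i * y i" if i: "i < N" for i
    using Lr_zero_harm[OF i g T, of E y 0] h[OF i] unfolding y_def by simp
  hence yc: "y i = y 0" if "i < N" for i using harmonic_const[OF sg conn] that by blast
  define c where "c = y 0 / (1 - exp (g*T))"
  have a: "1 - exp (g*T) \<noteq> 0" using a_bounds[OF g T] by linarith
  have su: "Sop N E u i = wt N E i * u i + wt N E i * c" if i: "i < N" for i
    by (rule Lr_zero_harm[OF i g T]) (use yc[OF i] a in \<open>simp add: y_def[symmetric] c_def\<close>)
  have "(\<Sum>i<N. Sop N E u i) = (\<Sum>i<N. wt N E i * u i) + c * (\<Sum>i<N. wt N E i)"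
    by (simp add: su sum.distrib sum_distrib_left mult.commute)
  hence "c * (\<Sum>i<N. wt N E i) = 0" using colsum[OF sg, of u] by simp
  moreover have "(\<Sum>i<N. wt N E i) > 0" using N0 by (intro sum_pos) (auto simp: wt_pos)
  ultimately have c0: "c = 0" by simp
  have "Sop N E u i = wt N E i * u i" if "i < N" for i using su[OF that] c0 by simp
  thus "\<And>i. i < N \<Longrightarrow> u i = u 0" using harmonic_const[OF sg conn] by blast
qed

lemma list_lemma: "(\<forall>n\<in>set L. n > 0) \<Longrightarrow> sum_list (map (min (2::nat)) L) \<le> 1 \<Longrightarrow> sum_list L \<ge> 1 \<Longrightarrow> sum_list L = 1"
proof (cases L)
  case Nil
  assume "sum_list L \<ge> 1" thus ?thesis using Nil by simp
next
  case (Cons x L')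
  assume pos: "\<forall>n\<in>set L. n > 0" and s: "sum_list (map (min (2::nat)) L) \<le> 1"
  have "min 2 x \<ge> 1" using pos Cons by auto
  moreover have h: "min 2 x + sum_list (map (min (2::nat)) L') \<le> 1" using s Cons by simp
  ultimately have "sum_list (map (min (2::nat)) L') = 0" and x: "min 2 x = 1" by linarith+
  hence "L' = []" using pos Cons by (cases L') auto
  thus ?thesis using x Cons by auto
qed


abbreviation "Gc N E g T \<equiv> map_mat complex_of_real (Gamma_mat N E g T)"
abbreviation "Bc N E g T \<equiv> char_matrix (Gc N E g T) 1"

lemma Gc_carrier: "Gc N E g T \<in> carrier_mat N N" using Gamma_carrier[of N E g T] by simp
lemma Bc_carrier: "Bc N E g T \<in> carrier_mat N N" using Gc_carrier by simp
lemma Bc_dims[simp]: "dim_row (Bc N E g T) = N" "dim_col (Bc N E g T) = N"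
  using Bc_carrier[of N E g T] by auto

lemma mult_zero_vec': "A \<in> carrier_mat N N \<Longrightarrow> A *\<^sub>v 0\<^sub>v N = (0\<^sub>v N :: 'a::comm_ring_1 vec)"
  by (intro eq_vecI) (auto simp: mult_vec_sum)

lemma Bc_apply:
  assumes z: "z \<in> carrier_vec N" and i: "i < N"
  shows "Re ((Bc N E g T *\<^sub>v z) $ i) = Lr N E g T (\<lambda>j. Re (z $ j)) i"
    and "Im ((Bc N E g T *\<^sub>v z) $ i) = Lr N E g T (\<lambda>j. Im (z $ j)) i"
proof -
  have e: "(Bc N E g T *\<^sub>v z) $ i = (\<Sum>j<N. (complex_of_real (Gamma_mat N E g T $$ (i,j) - (if i = j then 1 else 0))) * z $ j)"
  proof -
    have "(Bc N E g T *\<^sub>v z) $ i = (\<Sum>j<N. Bc N E g T $$ (i,j) * z $ j)"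
      by (rule mult_vec_sum[OF Bc_carrier z i])
    also have "\<dots> = (\<Sum>j<N. (complex_of_real (Gamma_mat N E g T $$ (i,j) - (if i = j then 1 else 0))) * z $ j)"
      using i Gamma_carrier[of N E g T] by (intro sum.cong refl) (auto simp: char_matrix_def)
    finally show ?thesis .
  qed
  show "Re ((Bc N E g T *\<^sub>v z) $ i) = Lr N E g T (\<lambda>j. Re (z $ j)) i"
    unfolding e Lr_def by (simp add: Re_sum)
  show "Im ((Bc N E g T *\<^sub>v z) $ i) = Lr N E g T (\<lambda>j. Im (z $ j)) i"
    unfolding e Lr_def by (simp add: Im_sum)
qed

lemma Bc_sq: "Bc N E g T ^\<^sub>m 2 = Bc N E g T * Bc N E g T"
  using Bc_carrier[of N E g T] by (simp add: numeral_2_eq_2)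

lemma ker_const:
  assumes sg: "simple_graph N E" and conn: "graph_connected N E" and g: "g < 0" and T: "T > 0"
    and w: "w \<in> carrier_vec N" and k: "(Bc N E g T ^\<^sub>m 2) *\<^sub>v w = 0\<^sub>v N"
  shows "w = (w $ 0) \<cdot>\<^sub>v vec N (\<lambda>_. 1)"
proof -
  let ?B = "Bc N E g T"
  define z where "z = ?B *\<^sub>v w"
  have z: "z \<in> carrier_vec N" unfolding z_def using Bc_carrier[of N E g T] w by auto
  have "?B *\<^sub>v z = 0\<^sub>v N" using k unfolding z_def Bc_sq
    by (subst assoc_mult_mat_vec[symmetric, OF Bc_carrier[of N E g T] Bc_carrier[of N E g T] w])
  hence bz: "(?B *\<^sub>v z) $ i = 0" if "i < N" for i using that by simp
  have re: "Re (w $ i) = Re (w $ 0)" if i: "i < N" for i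
  proof (rule R_const[OF sg conn g T _ i])
    fix i assume i: "i < N"
    have "Lr N E g T (\<lambda>j. Lr N E g T (\<lambda>j. Re (w $ j)) j) i = Lr N E g T (\<lambda>j. Re (z $ j)) i"
      by (rule Lr_cong) (simp only: z_def Bc_apply(1)[OF w])
    also have "\<dots> = 0" using Bc_apply(1)[OF z i, of E g T] bz[OF i] by simp
    finally show "Lr N E g T (\<lambda>j. Lr N E g T (\<lambda>j. Re (w $ j)) j) i = 0" .
  qed
  have im: "Im (w $ i) = Im (w $ 0)" if i: "i < N" for i
  proof (rule R_const[OF sg conn g T _ i])
    fix i assume i: "i < N"
    have "Lr N E g T (\<lambda>j. Lr N E g T (\<lambda>j. Im (w $ j)) j) i = Lr N E g T (\<lambda>j. Im (z $ j)) i"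
      by (rule Lr_cong) (simp only: z_def Bc_apply(2)[OF w])
    also have "\<dots> = 0" using Bc_apply(2)[OF z i, of E g T] bz[OF i] by simp
    finally show "Lr N E g T (\<lambda>j. Lr N E g T (\<lambda>j. Im (w $ j)) j) i = 0" .
  qed
  show ?thesis
  proof (rule eq_vecI)
    fix i assume "i < dim_vec ((w $ 0) \<cdot>\<^sub>v vec N (\<lambda>_. 1))"
    hence i: "i < N" by simp
    have "w $ i = w $ 0" using re[OF i] im[OF i] by (rule complex_eqI)
    thus "w $ i = ((w $ 0) \<cdot>\<^sub>v vec N (\<lambda>_. 1)) $ i" using i by simp
  qed (use w in simp)
qed

lemma ones_ker:
  assumes sg: "simple_graph N E"
  shows "Bc N E g T *\<^sub>v vec N (\<lambda>_. 1) = 0\<^sub>v N"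
proof (rule eq_vecI)
  fix i assume "i < dim_vec (0\<^sub>v N :: complex vec)"
  hence i: "i < N" by simp
  have c: "vec N (\<lambda>_. 1::complex) \<in> carrier_vec N" by simp
  have "Re ((Bc N E g T *\<^sub>v vec N (\<lambda>_. 1)) $ i) = 0"
  proof -
    have "Re ((Bc N E g T *\<^sub>v vec N (\<lambda>_. 1)) $ i) = Lr N E g T (\<lambda>j. 1) i"
      by (subst Bc_apply(1)[OF c i]) (rule Lr_cong, simp)
    also have "\<dots> = 0" using Lr_formula[OF i] ones_Sop[OF sg i] wt_pos[of N E i] by simp
    finally show ?thesis .
  qed
  moreover have "Im ((Bc N E g T *\<^sub>v vec N (\<lambda>_. 1)) $ i) = 0"
  proof -
    have "Im ((Bc N E g T *\<^sub>v vec N (\<lambda>_. 1)) $ i) = Lr N E g T (\<lambda>j. 0) i"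
      by (subst Bc_apply(2)[OF c i]) (rule Lr_cong, simp)
    also have "\<dots> = 0" unfolding Lr_def by simp
    finally show ?thesis .
  qed
  ultimately show "(Bc N E g T *\<^sub>v vec N (\<lambda>_. 1)) $ i = 0\<^sub>v N $ i" using i by (simp add: complex_eq_iff)
qed simp

lemma dim_gen_le1:
  assumes sg: "simple_graph N E" and conn: "graph_connected N E" and g: "g < 0" and T: "T > 0"
  shows "dim_gen_eigenspace (Gc N E g T) 1 2 \<le> 1"
proof -
  let ?B = "Bc N E g T"
  let ?K = "?B ^\<^sub>m 2"
  let ?o = "vec N (\<lambda>_. 1::complex)"
  have Kc: "?K \<in> carrier_mat N N" using Bc_carrier[of N E g T] by simp
  interpret K: kernel N N ?K by (unfold_locales) (rule Kc)
  have oK: "?o \<in> mat_kernel ?K"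
  proof (rule mat_kernelI[OF Kc])
    show "?o \<in> carrier_vec N" by simp
    have "?B * ?B *\<^sub>v ?o = 0\<^sub>v N"
      by (subst assoc_mult_mat_vec[OF Bc_carrier[of N E g T] Bc_carrier[of N E g T]]) (simp_all add: ones_ker[OF sg] mult_zero_vec'[OF Bc_carrier])
    thus "?K *\<^sub>v ?o = 0\<^sub>v N" by (simp only: Bc_sq)
  qed
  have s1: "K.Ker.span {?o} \<subseteq> mat_kernel ?K" using oK by (intro K.Ker.span_is_subset2) auto
  have s2: "mat_kernel ?K \<subseteq> K.Ker.span {?o}"
  proof
    fix w assume wk: "w \<in> mat_kernel ?K"
    have w: "w \<in> carrier_vec N" and kw: "?K *\<^sub>v w = 0\<^sub>v N" using mat_kernelD[OF Kc wk] by auto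
    have eq: "w = (w $ 0) \<cdot>\<^sub>v ?o" by (rule ker_const[OF sg conn g T w kw])
    have sub: "submodule class_ring (K.Ker.span {?o}) K.VK" using oK by (intro K.Ker.span_is_submodule) auto
    have "?o \<in> K.Ker.span {?o}" using oK K.Ker.in_own_span[of "{?o}"] by auto
    from submodule.smult_closed[OF sub _ this, of "w $ 0"]
    show "w \<in> K.Ker.span {?o}" using eq by simp
  qed
  have gen: "K.Ker.span {?o} = mat_kernel ?K" using s1 s2 by (rule equalityI)
  have "K.dim \<le> 1" by (rule K.Ker.dim_le1I[OF gen oK])
  thus ?thesis unfolding dim_gen_eigenspace_def by simp
qed


hide_const (open) Coset.order

interpretation ofr: map_poly_inj_idom_divide_hom "of_real :: real \<Rightarrow> complex" by unfold_locales simp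

lemma order_one:
  assumes sg: "simple_graph N E" and conn: "graph_connected N E" and g: "g < 0" and T: "T > 0"
  shows "order 1 (char_poly (Gamma_mat N E g T)) = 1"
proof -
  let ?G = "Gamma_mat N E g T"
  have N0: "0 < N" using conn unfolding graph_connected_def by simp
  have cp: "char_poly (Gc N E g T) = map_poly of_real (char_poly ?G)"
    by (rule of_real_hom.char_poly_hom[OF Gamma_carrier])
  have ord: "order 1 (char_poly ?G) = order 1 (char_poly (Gc N E g T))"
    using ofr.order_hom[of 1 "char_poly ?G"] cp by simp
  obtain as where "char_poly (Gc N E g T) = (\<Prod>a\<leftarrow>as. [:- a, 1:])"
    using char_poly_factorized[OF Gc_carrier] by blast
  from jordan_nf_exists[OF Gc_carrier this] obtain n_as where jnf: "jordan_nf (Gc N E g T) n_as" by blast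
  define L where "L = map fst (filter (\<lambda>na. snd na = 1) n_as)"
  have o: "order 1 (char_poly (Gc N E g T)) = sum_list L" unfolding L_def by (rule jordan_nf_order[OF jnf])
  have fe: "(\<lambda>(n, e). e = (1::complex)) = (\<lambda>na. snd na = 1)" by auto
  have d: "dim_gen_eigenspace (Gc N E g T) 1 2 = sum_list (map (min 2) L)"
    unfolding L_def using dim_gen_eigenspace[OF jnf, of 1 2, unfolded fe] by simp
  have pos: "\<forall>n\<in>set L. n > 0" using jnf unfolding jordan_nf_def L_def by (auto intro!: gr0I) (force)
  have "poly (char_poly ?G) 1 = 0"
    using Gamma_eig1[OF sg N0, of g T] eigenvalue_root_char_poly[OF Gamma_carrier] by simp
  moreover have "char_poly ?G \<noteq> 0"
    using degree_monic_char_poly[OF Gamma_carrier[of N E g T]] by auto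
  ultimately have "order 1 (char_poly ?G) \<noteq> 0" by (simp add: order_root)
  hence "sum_list L \<noteq> 0" using ord o by metis
  hence "sum_list L \<ge> 1" by linarith
  moreover have "sum_list (map (min 2) L) \<le> 1" using dim_gen_le1[OF sg conn g T] d by simp
  ultimately have "sum_list L = 1" using list_lemma pos by blast
  thus ?thesis using ord o by simp
qed

lemma ode_step:
  fixes x :: "real \<Rightarrow> nat \<Rightarrow> real"
  assumes g: "g < 0" and T: "T > 0"
    and cont: "\<forall>i<N. continuous_on {0..} (\<lambda>t. x t i)"
    and der: "\<forall>k::nat. \<forall>t \<in> {real k * T ..< real (Suc k) * T}. \<forall>i<N.
                ((\<lambda>s. x s i) has_real_derivative
                   (g * x t i - g * (G_mat N E *\<^sub>v vec N (x (real k * T))) $ i))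
                 (at t within {real k * T ..< real (Suc k) * T})"
  shows "vec N (x (real (Suc k) * T)) = Gamma_mat N E g T *\<^sub>v vec N (x (real k * T))"
proof (rule eq_vecI)
  fix i assume "i < dim_vec (Gamma_mat N E g T *\<^sub>v vec N (x (real k * T)))"
  hence i: "i < N" using Gamma_carrier[of N E g T] by simp
  define t0 where "t0 = real k * T"
  define t1 where "t1 = real (Suc k) * T"
  have t01: "t0 < t1" using T unfolding t0_def t1_def by (simp add: distrib_right)
  have t0: "0 \<le> t0" using T unfolding t0_def by simp
  define c where "c = (G_mat N E *\<^sub>v vec N (x t0)) $ i"
  define h where "h t = (x t i - c) * exp (- g * (t - t0))" for t
  have hc: "continuous_on {t0..t1} h"
  proof -
    have "continuous_on {t0..t1} (\<lambda>t. x t i)"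
      using cont i t0 by (rule_tac continuous_on_subset[of "{0..}"]) auto
    thus ?thesis unfolding h_def by (intro continuous_intros)
  qed
  have hd: "(h has_real_derivative 0) (at t)" if t: "t0 < t" "t < t1" for t
  proof -
    have tin: "t \<in> {real k * T ..< real (Suc k) * T}" using t unfolding t0_def t1_def by auto
    have "((\<lambda>s. x s i) has_real_derivative (g * x t i - g * (G_mat N E *\<^sub>v vec N (x (real k * T))) $ i))
       (at t within {real k * T ..< real (Suc k) * T})" using der tin i by blast
    hence "((\<lambda>s. x s i) has_real_derivative (g * x t i - g * c)) (at t within {t0..<t1})"
      unfolding t0_def t1_def c_def .
    moreover have "at t within {t0..<t1} = at t"
      by (rule at_within_open_subset[of _ "{t0<..<t1}"]) (use t in auto)
    ultimately have dx: "((\<lambda>s. x s i) has_real_derivative (g * x t i - g * c)) (at t)" by simp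
    have d1: "((\<lambda>s. x s i - c) has_real_derivative (g * x t i - g * c) - 0) (at t)"
      by (rule DERIV_diff[OF dx DERIV_const])
    have d2: "((\<lambda>s. exp (- g * (s - t0))) has_real_derivative exp (- g * (t - t0)) * (- g)) (at t)"
      by (auto intro!: derivative_eq_intros)
    have "(h has_real_derivative ((g * x t i - g * c) - 0) * exp (- g * (t - t0)) + (exp (- g * (t - t0)) * (- g)) * (x t i - c)) (at t)"
      unfolding h_def by (rule DERIV_mult[OF d1 d2])
    thus ?thesis by (rule DERIV_cong) (simp add: algebra_simps)
  qed
  have "h t1 = h t0" by (rule DERIV_isconst_end[OF t01 hc hd])
  hence "(x t1 i - c) * exp (- g * (t1 - t0)) = x t0 i - c" unfolding h_def by simp
  moreover have "t1 - t0 = T" unfolding t0_def t1_def by (simp add: algebra_simps)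
  ultimately have "(x t1 i - c) * exp (- (g * T)) = x t0 i - c" by simp
  hence "x t1 i - c = (x t0 i - c) * exp (g * T)"
    by (metis exp_minus_inverse mult.commute mult.left_commute mult_1_right)
  hence xt1: "x t1 i = exp (g*T) * x t0 i + (1 - exp (g*T)) * c" by (simp add: algebra_simps)
  have vc: "vec N (x t0) \<in> carrier_vec N" by simp
  have sums: "(\<Sum>j<N. A $$ (i,j) * vec N (x t0) $ j) = (\<Sum>j<N. A $$ (i,j) * x t0 j)" for A :: "real mat"
    by (intro sum.cong) auto
  have "c = Sop N E (\<lambda>j. x t0 j) i / wt N E i"
    unfolding c_def mult_vec_sum[OF G_carrier vc i] sums by (rule G_apply[OF i])
  moreover have "(Gamma_mat N E g T *\<^sub>v vec N (x t0)) $ i = exp (g*T) * x t0 i + (1 - exp (g*T)) * (Sop N E (\<lambda>j. x t0 j) i / wt N E i)"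
    unfolding mult_vec_sum[OF Gamma_carrier vc i] sums by (rule Gamma_apply[OF i])
  ultimately show "vec N (x (real (Suc k) * T)) $ i = (Gamma_mat N E g T *\<^sub>v vec N (x (real k * T))) $ i"
    using xt1 i unfolding t0_def t1_def by simp
qed (use Gamma_carrier[of N E g T] in simp)


theorem mainTheorem7:
  fixes N :: nat and E :: "nat \<Rightarrow> nat \<Rightarrow> bool" and g T :: real
  assumes "simple_graph N E" and "graph_connected N E" and "T > 0" and "g < 0"
  shows "(\<forall>\<mu>. eigenvalue (map_mat complex_of_real (Gamma_mat N E g T)) \<mu> \<longrightarrow>
            \<mu> \<in> \<real> \<and> -1 < Re \<mu> \<and> Re \<mu> \<le> 1)
       \<and> eigenvalue (Gamma_mat N E g T) 1
       \<and> order 1 (char_poly (Gamma_mat N E g T)) = 1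
       \<and> Gamma_mat N E g T *\<^sub>v ones_vec N = ones_vec N
       \<and> (\<forall>x :: real \<Rightarrow> nat \<Rightarrow> real.
            ((\<forall>i<N. continuous_on {0..} (\<lambda>t. x t i)) \<and>
             (\<forall>k::nat. \<forall>t \<in> {real k * T ..< real (Suc k) * T}. \<forall>i<N.
                ((\<lambda>s. x s i) has_real_derivative
                   (g * x t i - g * (G_mat N E *\<^sub>v vec N (x (real k * T))) $ i))
                 (at t within {real k * T ..< real (Suc k) * T})))
            \<longrightarrow> (\<forall>k::nat. vec N (x (real (Suc k) * T))
                   = Gamma_mat N E g T *\<^sub>v vec N (x (real k * T))))"
proof -
  have N0: "0 < N" using assms(2) unfolding graph_connected_def by simp
  show ?thesis
    apply (intro conjI)
    subgoal by (intro allI impI) (rule complex_eig[OF assms(1,4,3)])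
    subgoal by (rule Gamma_eig1[OF assms(1) N0])
    subgoal by (rule order_one[OF assms(1,2,4,3)])
    subgoal by (rule Gamma_ones[OF assms(1)])
    subgoal
    proof (intro allI impI)
      fix x :: "real \<Rightarrow> nat \<Rightarrow> real" and k :: nat
      assume h: "(\<forall>i<N. continuous_on {0..} (\<lambda>t. x t i)) \<and>
             (\<forall>k::nat. \<forall>t \<in> {real k * T ..< real (Suc k) * T}. \<forall>i<N.
                ((\<lambda>s. x s i) has_real_derivative
                   (g * x t i - g * (G_mat N E *\<^sub>v vec N (x (real k * T))) $ i))
                 (at t within {real k * T ..< real (Suc k) * T}))"
      show "vec N (x (real (Suc k) * T)) = Gamma_mat N E g T *\<^sub>v vec N (x (real k * T))"
        by (rule ode_step[OF assms(4,3) conjunct1[OF h] conjunct2[OF h]])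
    qed
    done
qed

end
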